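(* Let $D,D'$ be torus invariant Weil divisors on the cyclic quotient singularity $X$, and let $K=-[\rho^0]-[\rho^1]$ be the canonical divisor (so $\mathrm{vert}(K)=[1,\tfrac{q+1}{n}]$). Define \[ \mathrm{below}(D)=\mathrm{int}(P_D)\setminus\bigcup_{u\in G(D)}(u+\mathrm{int}\,\sigma^\vee),\quad \mathrm{abelow}(D)=P_D\setminus\bigcup_{u\in G(D)}(u+\sigma^\vee), \] \[ \mathrm{link}(D)=\mathrm{below}(D)\cap\big[\overline{\mathrm{below}(D)}+\mathrm{vert}(K)\big]. \] Then: (1) $\mathrm{link}(D)=\overline{\mathrm{abelow}(D)}\cap\big[\mathrm{abelow}(D)+\mathrm{vert}(K)\big]$; (2) $\big[\mathrm{below}(D)+\mathrm{vert}(D')\big]\cap M=\big[\mathrm{link}(D)+\mathrm{vert}(D')\big]\cap M$; (3) $\big[\mathrm{abelow}(D)+\mathrm{vert}(D')\big]\cap M=\big[\mathrm{link}(D)+\mathrm{vert}(D')-\mathrm{vert}(K)\big]\cap M$.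
   Context: Fix coprime integers $0<q<n$. Let $M=\mathbb Z^2$, $M_{\mathbb Q}=\mathbb Q^2$ (topology induced from $\mathbb R^2$; $\mathrm{int}$ is interior and $\overline{\,\cdot\,}$ is closure), with the standard scalar product $\langle\cdot,\cdot\rangle$. Put $\rho^0=(1,0)$, $\rho^1=(-q,n)$, $\sigma^\vee=\{u\in M_{\mathbb Q}:\langle u,\rho^0\rangle\ge 0,\ \langle u,\rho^1\rangle\ge 0\}$, $R=\mathbb C[\sigma^\vee\cap M]$, $X=\mathrm{Spec}\,R$. A torus invariant Weil divisor is $D=a_0[\rho^0]+a_1[\rho^1]$, $a_i\in\mathbb Z$, with section polyhedron $P_D=\{u\in M_{\mathbb Q}:\langle u,\rho^i\rangle\ge -a_i,\ i=0,1\}=\mathrm{vert}(D)+\sigma^\vee$ for a unique $\mathrm{vert}(D)\in\mathbb Q^2$. $G(D)$ is the set of lattice points $u\in M$ lying on compact edges of $\mathrm{conv}(P_D\cap M)$. Sums of a set and a vector are Minkowski translates. *)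

theory Defs
  imports "HOL-Analysis.Analysis"
begin

text \<open>Points of M_Q = Q^2 are represented as rational points of real \<times> real;
  the topology on M_Q is the subspace topology induced from R^2.\<close>

definition Q2 :: "(real \<times> real) set" where
  "Q2 = {(x, y). x \<in> \<rat> \<and> y \<in> \<rat>}"

definition latM :: "(real \<times> real) set" where
  "latM = {(x, y). x \<in> \<int> \<and> y \<in> \<int>}"

definition ip :: "real \<times> real \<Rightarrow> real \<times> real \<Rightarrow> real" where
  "ip u v = fst u * fst v + snd u * snd v"

definition rho0 :: "real \<times> real" where
  "rho0 = (1, 0)"

definition rho1 :: "nat \<Rightarrow> nat \<Rightarrow> real \<times> real" where
  "rho1 q n = (- real q, real n)"

definition sigmaDual :: "nat \<Rightarrow> nat \<Rightarrow> (real \<times> real) set" where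
  "sigmaDual q n = {u \<in> Q2. ip u rho0 \<ge> 0 \<and> ip u (rho1 q n) \<ge> 0}"

text \<open>Section polyhedron of D = a0[rho0] + a1[rho1].\<close>
definition PD :: "nat \<Rightarrow> nat \<Rightarrow> int \<Rightarrow> int \<Rightarrow> (real \<times> real) set" where
  "PD q n a0 a1 = {u \<in> Q2. ip u rho0 \<ge> - of_int a0 \<and> ip u (rho1 q n) \<ge> - of_int a1}"

definition transl :: "real \<times> real \<Rightarrow> (real \<times> real) set \<Rightarrow> (real \<times> real) set" where
  "transl v S = (\<lambda>x. v + x) ` S"

definition vert :: "nat \<Rightarrow> nat \<Rightarrow> int \<Rightarrow> int \<Rightarrow> real \<times> real" where
  "vert q n a0 a1 = (THE v. v \<in> Q2 \<and> PD q n a0 a1 = transl v (sigmaDual q n))"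

definition intQ :: "(real \<times> real) set \<Rightarrow> (real \<times> real) set" where
  "intQ S = (top_of_set Q2) interior_of S"

definition clQ :: "(real \<times> real) set \<Rightarrow> (real \<times> real) set" where
  "clQ S = (top_of_set Q2) closure_of S"

definition GD :: "nat \<Rightarrow> nat \<Rightarrow> int \<Rightarrow> int \<Rightarrow> (real \<times> real) set" where
  "GD q n a0 a1 = {u \<in> latM. \<exists>F. F face_of convex hull (PD q n a0 a1 \<inter> latM)
       \<and> compact F \<and> aff_dim F = 1 \<and> u \<in> F}"

definition below :: "nat \<Rightarrow> nat \<Rightarrow> int \<Rightarrow> int \<Rightarrow> (real \<times> real) set" where
  "below q n a0 a1 = intQ (PD q n a0 a1)
     - (\<Union>u\<in>GD q n a0 a1. transl u (intQ (sigmaDual q n)))"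

definition abelow :: "nat \<Rightarrow> nat \<Rightarrow> int \<Rightarrow> int \<Rightarrow> (real \<times> real) set" where
  "abelow q n a0 a1 = PD q n a0 a1
     - (\<Union>u\<in>GD q n a0 a1. transl u (sigmaDual q n))"

definition vertK :: "nat \<Rightarrow> nat \<Rightarrow> real \<times> real" where
  "vertK q n = vert q n (-1) (-1)"

definition link :: "nat \<Rightarrow> nat \<Rightarrow> int \<Rightarrow> int \<Rightarrow> (real \<times> real) set" where
  "link q n a0 a1 = below q n a0 a1 \<inter> transl (vertK q n) (clQ (below q n a0 a1))"

end

theory Submission
  imports Defs
begin

definition L0 :: "real \<times> real \<Rightarrow> real" where "L0 u = fst u"
definition L1 :: "nat \<Rightarrow> nat \<Rightarrow> real \<times> real \<Rightarrow> real" where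
  "L1 q n u = real n * snd u - real q * fst u"

lemma L0_diff[simp]: "L0 (x - y) = L0 x - L0 y" and L0_add[simp]: "L0 (x + y) = L0 x + L0 y"
  and L0_scale[simp]: "L0 (c *\<^sub>R x) = c * L0 x"
  by (auto simp: L0_def)
lemma L1_diff[simp]: "L1 q n (x - y) = L1 q n x - L1 q n y" and L1_add[simp]: "L1 q n (x + y) = L1 q n x + L1 q n y"
  and L1_scale[simp]: "L1 q n (c *\<^sub>R x) = c * L1 q n x"
  by (auto simp: L1_def algebra_simps)

lemma Q2_iff: "u \<in> Q2 \<longleftrightarrow> fst u \<in> \<rat> \<and> snd u \<in> \<rat>"
  by (cases u) (auto simp: Q2_def)
lemma Q2_diff: "x \<in> Q2 \<Longrightarrow> y \<in> Q2 \<Longrightarrow> x - y \<in> Q2"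
  and Q2_add: "x \<in> Q2 \<Longrightarrow> y \<in> Q2 \<Longrightarrow> x + y \<in> Q2"
  and Q2_scale: "c \<in> \<rat> \<Longrightarrow> x \<in> Q2 \<Longrightarrow> c *\<^sub>R x \<in> Q2"
  by (auto simp: Q2_iff)
lemma latM_Q2: "x \<in> latM \<Longrightarrow> x \<in> Q2"
  by (cases x) (auto simp: latM_def Q2_def Ints_subset_Rats[THEN subsetD])
lemma latM_L: "x \<in> latM \<Longrightarrow> L0 x \<in> \<int> \<and> L1 q n x \<in> \<int>"
  by (cases x) (auto simp: latM_def L0_def L1_def)

lemma mem_PD: "u \<in> PD q n a0 a1 \<longleftrightarrow> u \<in> Q2 \<and> L0 u \<ge> - of_int a0 \<and> L1 q n u \<ge> - of_int a1"
  by (auto simp: PD_def ip_def rho0_def rho1_def L0_def L1_def algebra_simps)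

lemma sigma_PD: "sigmaDual q n = PD q n 0 0"
  by (auto simp: sigmaDual_def PD_def)

lemma mem_transl: "x \<in> transl v S \<longleftrightarrow> x - v \<in> S"
  by (auto simp: transl_def image_iff intro: bexI[of _ "x - v"])

lemma rat_small: assumes "(0::real) < r" obtains e where "e \<in> \<rat>" "0 < e" "e < r"
  using Rats_dense_in_real[OF assms] by blast

lemma mem_intPD:
  assumes "0 < n"
  shows "u \<in> intQ (PD q n a0 a1) \<longleftrightarrow> u \<in> Q2 \<and> L0 u > - of_int a0 \<and> L1 q n u > - of_int a1"
proof
  assume "u \<in> Q2 \<and> L0 u > - of_int a0 \<and> L1 q n u > - of_int a1"
  moreover have "open {u. L0 u > - of_int a0 \<and> L1 q n u > - of_int a1}"
    unfolding L0_def L1_def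
    by (intro open_Collect_conj open_Collect_less continuous_intros)
  ultimately show "u \<in> intQ (PD q n a0 a1)"
    unfolding intQ_def interior_of_def openin_open
    by (intro CollectI exI[of _ "Q2 \<inter> {u. L0 u > - of_int a0 \<and> L1 q n u > - of_int a1}"])
       (auto simp: mem_PD)
next
  assume "u \<in> intQ (PD q n a0 a1)"
  then obtain T where T: "open T" "u \<in> T" "Q2 \<inter> T \<subseteq> PD q n a0 a1" "u \<in> Q2"
    unfolding intQ_def interior_of_def openin_open by blast
  then obtain r where r: "r > 0" "ball u r \<subseteq> T" using open_contains_ball by blast
  obtain e where e: "e \<in> \<rat>" "0 < e" "e < r" using rat_small[OF r(1)] .
  have u: "u \<in> PD q n a0 a1" using T by auto
  have d: "u - (e, 0) \<in> ball u r" "u - (0, e) \<in> ball u r"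
    using e by (auto simp: dist_norm)
  have q: "u - (e,0) \<in> Q2" "u - (0,e) \<in> Q2" using e T(4) by (auto simp: Q2_iff)
  have "u - (e,0) \<in> PD q n a0 a1" "u - (0,e) \<in> PD q n a0 a1"
    using d q r T(3) by blast+
  then have "L0 u - e \<ge> - of_int a0" "L1 q n u - real n * e \<ge> - of_int a1"
    by (auto simp: mem_PD L0_def L1_def algebra_simps)
  then show "u \<in> Q2 \<and> L0 u > - of_int a0 \<and> L1 q n u > - of_int a1"
    using e assms T(4) by (auto intro: less_le_trans[OF _ ]) (smt (verit) mult_pos_pos of_nat_0_less_iff)+
qed

lemma clQ_iff: "x \<in> clQ S \<longleftrightarrow> x \<in> Q2 \<and> x \<in> closure (Q2 \<inter> S)"
  by (simp add: clQ_def closure_of_subtopology)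

lemma int_step: "(a::real) \<in> \<int> \<Longrightarrow> b \<in> \<int> \<Longrightarrow> a < b \<Longrightarrow> a + 1 \<le> b"
  by (elim Ints_cases) simp

lemma floor_step: "(k::real) \<in> \<int> \<Longrightarrow> x < k \<Longrightarrow> of_int (floor x) + 1 \<le> k"
proof (elim Ints_cases)
  fix j assume "k = of_int j" "x < k"
  then have "floor x < j" by (simp add: floor_less_iff)
  then show "of_int (floor x) + 1 \<le> k" using \<open>k = of_int j\<close> by simp
qed

lemma vert_eq:
  assumes "0 < n"
  shows "vert q n b0 b1 = (- of_int b0, (- of_int b1 - real q * of_int b0) / real n)"
proof -
  define v where "v = ((- of_int b0, (- of_int b1 - real q * of_int b0) / real n) :: real \<times> real)"
  have vQ: "v \<in> Q2" by (auto simp: v_def Q2_iff)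
  have L: "L0 v = - of_int b0" "L1 q n v = - of_int b1"
    using assms by (auto simp: v_def L0_def L1_def)
  have P: "PD q n b0 b1 = transl v (sigmaDual q n)"
    by (auto simp: mem_transl sigma_PD mem_PD L vQ Q2_diff intro: Q2_diff
        dest: Q2_add[OF _ vQ]) (metis Q2_add diff_add_cancel vQ)
  show ?thesis unfolding vert_def v_def[symmetric]
  proof (rule the_equality)
    show "v \<in> Q2 \<and> PD q n b0 b1 = transl v (sigmaDual q n)" using vQ P by simp
  next
    fix w assume w: "w \<in> Q2 \<and> PD q n b0 b1 = transl w (sigmaDual q n)"
    have "w \<in> PD q n b0 b1" using w by (auto simp: mem_transl sigma_PD mem_PD Q2_iff L0_def L1_def)
    then have "w - v \<in> sigmaDual q n" using P by (simp add: mem_transl)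
    moreover have "v \<in> PD q n b0 b1" using P vQ by (auto simp: mem_transl sigma_PD mem_PD Q2_iff L0_def L1_def)
    then have "v - w \<in> sigmaDual q n" using w by (simp add: mem_transl)
    ultimately have "L0 (w - v) = 0" "L1 q n (w - v) = 0"
      by (auto simp: sigma_PD mem_PD)
    then have "fst w = fst v" "real n * snd w = real n * snd v"
      by (auto simp: L0_def L1_def algebra_simps)
    then show "w = v" using assms by (simp add: prod_eq_iff)
  qed
qed

lemma vert_props:
  assumes "0 < n"
  shows "vert q n b0 b1 \<in> Q2" "L0 (vert q n b0 b1) = - of_int b0" "L1 q n (vert q n b0 b1) = - of_int b1"
  using assms by (auto simp: vert_eq Q2_iff L0_def L1_def)

lemma vertK_props:
  assumes "0 < n"
  shows "vertK q n \<in> Q2" "L0 (vertK q n) = 1" "L1 q n (vertK q n) = 1" "vertK q n \<noteq> 0"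
  using vert_props[OF assms, of q "-1" "-1"] by (auto simp: vertK_def L0_def)

lemma GD_latM: "GD q n a0 a1 \<subseteq> latM" by (auto simp: GD_def)

lemma mem_below:
  assumes "0 < n"
  shows "p \<in> below q n a0 a1 \<longleftrightarrow> p \<in> Q2 \<and> L0 p > - of_int a0 \<and> L1 q n p > - of_int a1
     \<and> (\<forall>g\<in>GD q n a0 a1. \<not> (L0 p > L0 g \<and> L1 q n p > L1 q n g))"
proof -
  have "p \<in> transl g (intQ (sigmaDual q n)) \<longleftrightarrow> p \<in> Q2 \<and> L0 p > L0 g \<and> L1 q n p > L1 q n g"
    if "g \<in> GD q n a0 a1" for g
  proof -
    have gQ: "g \<in> Q2" using that GD_latM latM_Q2 by blast
    have "p - g \<in> Q2 \<longleftrightarrow> p \<in> Q2" using gQ by (metis Q2_add Q2_diff diff_add_cancel)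
    then show ?thesis using assms by (simp add: mem_transl sigma_PD mem_intPD)
  qed
  then show ?thesis unfolding below_def using assms by (auto simp: mem_intPD)
qed

lemma mem_abelow:
  assumes "0 < n"
  shows "p \<in> abelow q n a0 a1 \<longleftrightarrow> p \<in> Q2 \<and> L0 p \<ge> - of_int a0 \<and> L1 q n p \<ge> - of_int a1
     \<and> (\<forall>g\<in>GD q n a0 a1. \<not> (L0 p \<ge> L0 g \<and> L1 q n p \<ge> L1 q n g))"
proof -
  have "p \<in> transl g (sigmaDual q n) \<longleftrightarrow> p \<in> Q2 \<and> L0 p \<ge> L0 g \<and> L1 q n p \<ge> L1 q n g"
    if "g \<in> GD q n a0 a1" for g
  proof -
    have gQ: "g \<in> Q2" using that GD_latM latM_Q2 by blast
    have "p - g \<in> Q2 \<longleftrightarrow> p \<in> Q2" using gQ by (metis Q2_add Q2_diff diff_add_cancel)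
    then show ?thesis by (simp add: mem_transl sigma_PD mem_PD)
  qed
  then show ?thesis unfolding abelow_def using assms by (auto simp: mem_PD)
qed

lemma A_sub_clB:
  assumes n: "0 < n" and p: "p \<in> abelow q n a0 a1"
  shows "p \<in> clQ (below q n a0 a1)"
proof -
  let ?e = "vertK q n"
  note ep = vertK_props[OF n, of q]
  note pA = p[unfolded mem_abelow[OF n]]
  define \<delta> where "\<delta> = min (of_int (floor (L0 p)) + 1 - L0 p) (of_int (floor (L1 q n p)) + 1 - L1 q n p)"
  have \<delta>: "\<delta> > 0" unfolding \<delta>_def by linarith
  have "\<exists>y\<in>Q2 \<inter> below q n a0 a1. dist y p < r" if r: "r > 0" for r
  proof -
    have "min \<delta> (r / norm ?e) > 0" using \<delta> r ep(4) by simp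
    then obtain t where t: "t \<in> \<rat>" "0 < t" "t < min \<delta> (r / norm ?e)" by (rule rat_small)
    define y where "y = p + t *\<^sub>R ?e"
    have yQ: "y \<in> Q2" unfolding y_def using pA ep t by (intro Q2_add Q2_scale) auto
    have "dist y p = t * norm ?e" using t by (simp add: y_def dist_norm)
    also have "\<dots> < r" using t ep(4) by (simp add: field_simps)
    finally have d: "dist y p < r" .
    have Ly: "L0 y = L0 p + t" "L1 q n y = L1 q n p + t" using ep by (auto simp: y_def)
    have "\<not> (L0 y > L0 g \<and> L1 q n y > L1 q n g)" if g: "g \<in> GD q n a0 a1" for g
    proof
      assume h: "L0 y > L0 g \<and> L1 q n y > L1 q n g"
      have gi: "L0 g \<in> \<int>" "L1 q n g \<in> \<int>" using g GD_latM latM_L by blast+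
      from pA g have "L0 p < L0 g \<or> L1 q n p < L1 q n g" by force
      then show False
      proof
        assume "L0 p < L0 g"
        from floor_step[OF gi(1) this] have "L0 p + \<delta> \<le> L0 g" unfolding \<delta>_def by linarith
        then show False using h t Ly by linarith
      next
        assume "L1 q n p < L1 q n g"
        from floor_step[OF gi(2) this] have "L1 q n p + \<delta> \<le> L1 q n g" unfolding \<delta>_def by linarith
        then show False using h t Ly by linarith
      qed
    qed
    then have "y \<in> below q n a0 a1" using yQ pA t Ly by (auto simp: mem_below[OF n])
    then show ?thesis using yQ d by blast
  qed
  then show ?thesis using pA by (simp add: clQ_iff closure_approachable)
qed

lemma B_sub_clA:
  assumes n: "0 < n" and p: "p \<in> below q n a0 a1"
  shows "p \<in> clQ (abelow q n a0 a1)"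
proof -
  let ?e = "vertK q n"
  note ep = vertK_props[OF n, of q]
  note pB = p[unfolded mem_below[OF n]]
  define \<delta> where "\<delta> = min (L0 p + of_int a0) (L1 q n p + of_int a1)"
  have \<delta>: "\<delta> > 0" unfolding \<delta>_def using pB by linarith
  have "\<exists>y\<in>Q2 \<inter> abelow q n a0 a1. dist y p < r" if r: "r > 0" for r
  proof -
    have "min \<delta> (r / norm ?e) > 0" using \<delta> r ep(4) by simp
    then obtain t where t: "t \<in> \<rat>" "0 < t" "t < min \<delta> (r / norm ?e)" by (rule rat_small)
    define y where "y = p - t *\<^sub>R ?e"
    have yQ: "y \<in> Q2" unfolding y_def using pB ep t by (intro Q2_diff Q2_scale) auto
    have "dist y p = t * norm ?e" using t by (simp add: y_def dist_norm)
    also have "\<dots> < r" using t ep(4) by (simp add: field_simps)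
    finally have d: "dist y p < r" .
    have Ly: "L0 y = L0 p - t" "L1 q n y = L1 q n p - t" using ep by (auto simp: y_def)
    have "\<not> (L0 y \<ge> L0 g \<and> L1 q n y \<ge> L1 q n g)" if g: "g \<in> GD q n a0 a1" for g
      using pB g t Ly by force
    moreover have "L0 y \<ge> - of_int a0" "L1 q n y \<ge> - of_int a1" using Ly t unfolding \<delta>_def by linarith+
    ultimately have "y \<in> abelow q n a0 a1" using yQ by (auto simp: mem_abelow[OF n])
    then show ?thesis using yQ d by blast
  qed
  then show ?thesis using pB by (simp add: clQ_iff closure_approachable)
qed

lemma clB_sub:
  assumes n: "0 < n" and x: "x \<in> clQ (below q n a0 a1)"
  shows "x \<in> Q2 \<and> L0 x \<ge> - of_int a0 \<and> L1 q n x \<ge> - of_int a1"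
proof -
  let ?C = "{x. L0 x \<ge> - of_int a0 \<and> L1 q n x \<ge> - of_int a1}"
  have "closed ?C" unfolding L0_def L1_def
    by (intro closed_Collect_conj closed_Collect_le continuous_intros)
  moreover have "Q2 \<inter> below q n a0 a1 \<subseteq> ?C" by (auto simp: mem_below[OF n])
  ultimately have "closure (Q2 \<inter> below q n a0 a1) \<subseteq> ?C" by (rule closure_minimal[rotated])
  then show ?thesis using x by (auto simp: clQ_iff)
qed

lemma notin_clA:
  assumes n: "0 < n" and p: "p \<in> clQ (abelow q n a0 a1)" and g: "g \<in> GD q n a0 a1"
  shows "\<not> (L0 p > L0 g \<and> L1 q n p > L1 q n g)"
proof -
  let ?O = "{x. L0 x > L0 g \<and> L1 q n x > L1 q n g}"
  have o: "open ?O" unfolding L0_def L1_def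
    by (intro open_Collect_conj open_Collect_less continuous_intros)
  have "?O \<inter> (Q2 \<inter> abelow q n a0 a1) = {}" using g by (force simp: mem_abelow[OF n])
  then have "?O \<inter> closure (Q2 \<inter> abelow q n a0 a1) = {}" using open_Int_closure_eq_empty[OF o] by blast
  then show ?thesis using p by (auto simp: clQ_iff)
qed

lemma mem_link:
  "x \<in> link q n a0 a1 \<longleftrightarrow> x \<in> below q n a0 a1 \<and> x - vertK q n \<in> clQ (below q n a0 a1)"
  by (simp add: link_def mem_transl)

theorem mainTheorem8:
  fixes q n :: nat and a0 a1 b0 b1 :: int
  assumes "0 < q" and "q < n" and "coprime q n"
  shows "link q n a0 a1 = clQ (abelow q n a0 a1) \<inter> transl (vertK q n) (abelow q n a0 a1)
    \<and> transl (vert q n b0 b1) (below q n a0 a1) \<inter> latM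
        = transl (vert q n b0 b1) (link q n a0 a1) \<inter> latM
    \<and> transl (vert q n b0 b1) (abelow q n a0 a1) \<inter> latM
        = transl (vert q n b0 b1 - vertK q n) (link q n a0 a1) \<inter> latM"
proof (intro conjI)
  have n: "0 < n" using assms by simp
  let ?e = "vertK q n" and ?w = "vert q n b0 b1"
  note ep = vertK_props[OF n, of q]
  note wp = vert_props[OF n, of q b0 b1]
  show "link q n a0 a1 = clQ (abelow q n a0 a1) \<inter> transl ?e (abelow q n a0 a1)"
  proof (intro set_eqI iffI)
    fix x assume "x \<in> link q n a0 a1"
    then have xB: "x \<in> below q n a0 a1" and xe: "x - ?e \<in> clQ (below q n a0 a1)"
      by (auto simp: mem_link)
    note c = clB_sub[OF n xe]
    have "x - ?e \<in> abelow q n a0 a1"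
      using xB c ep by (force simp: mem_abelow[OF n] mem_below[OF n])
    then show "x \<in> clQ (abelow q n a0 a1) \<inter> transl ?e (abelow q n a0 a1)"
      using B_sub_clA[OF n xB] by (simp add: mem_transl)
  next
    fix x assume "x \<in> clQ (abelow q n a0 a1) \<inter> transl ?e (abelow q n a0 a1)"
    then have xA: "x \<in> clQ (abelow q n a0 a1)" and xe: "x - ?e \<in> abelow q n a0 a1"
      by (auto simp: mem_transl)
    have xQ: "x \<in> Q2" using xA by (simp add: clQ_iff)
    have "x \<in> below q n a0 a1"
      using xQ xe ep notin_clA[OF n xA] by (force simp: mem_abelow[OF n] mem_below[OF n])
    then show "x \<in> link q n a0 a1" using A_sub_clB[OF n xe] by (simp add: mem_link)
  qed
  show "transl ?w (below q n a0 a1) \<inter> latM = transl ?w (link q n a0 a1) \<inter> latM"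
  proof (intro set_eqI iffI)
    fix x assume x: "x \<in> transl ?w (below q n a0 a1) \<inter> latM"
    define z where "z = x - ?w"
    have zB: "z \<in> below q n a0 a1" using x by (simp add: mem_transl z_def)
    have zi: "L0 z \<in> \<int>" "L1 q n z \<in> \<int>" using x latM_L[of x] wp by (auto simp: z_def)
    note zB' = zB[unfolded mem_below[OF n]]
    have "L0 z - 1 \<ge> - of_int a0" using int_step[of "- of_int a0" "L0 z"] zi zB' by auto
    moreover have "L1 q n z - 1 \<ge> - of_int a1" using int_step[of "- of_int a1" "L1 q n z"] zi zB' by auto
    ultimately have "z - ?e \<in> abelow q n a0 a1"
      using zB' ep by (force simp: mem_abelow[OF n] intro: Q2_diff)
    then show "x \<in> transl ?w (link q n a0 a1) \<inter> latM"
      using A_sub_clB[OF n] zB x by (simp add: mem_transl mem_link z_def)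
  next
    fix x assume "x \<in> transl ?w (link q n a0 a1) \<inter> latM"
    then show "x \<in> transl ?w (below q n a0 a1) \<inter> latM" by (simp add: mem_transl mem_link)
  qed
  show "transl ?w (abelow q n a0 a1) \<inter> latM = transl (?w - ?e) (link q n a0 a1) \<inter> latM"
  proof (intro set_eqI iffI)
    fix x assume x: "x \<in> transl ?w (abelow q n a0 a1) \<inter> latM"
    define z where "z = x - ?w"
    have zA: "z \<in> abelow q n a0 a1" using x by (simp add: mem_transl z_def)
    note zA' = zA[unfolded mem_abelow[OF n]]
    have zi: "L0 z \<in> \<int>" "L1 q n z \<in> \<int>" using x latM_L[of x] wp by (auto simp: z_def)
    have "\<not> (L0 (z + ?e) > L0 g \<and> L1 q n (z + ?e) > L1 q n g)" if g: "g \<in> GD q n a0 a1" for g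
    proof
      assume h: "L0 (z + ?e) > L0 g \<and> L1 q n (z + ?e) > L1 q n g"
      have gi: "L0 g \<in> \<int>" "L1 q n g \<in> \<int>" using g GD_latM latM_L by blast+
      have "L0 g + 1 \<le> L0 z + 1" using int_step[of "L0 g" "L0 z + 1"] gi zi h ep by auto
      moreover have "L1 q n g + 1 \<le> L1 q n z + 1" using int_step[of "L1 q n g" "L1 q n z + 1"] gi zi h ep by auto
      ultimately show False using zA' g by auto
    qed
    then have "z + ?e \<in> below q n a0 a1"
      using zA' ep by (auto simp: mem_below[OF n] intro: Q2_add)
    moreover have eq: "x - (?w - ?e) = z + ?e" by (simp add: z_def algebra_simps)
    ultimately show "x \<in> transl (?w - ?e) (link q n a0 a1) \<inter> latM"
      unfolding Int_iff mem_transl eq mem_link using A_sub_clB[OF n zA] x by simp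
  next
    fix x assume x: "x \<in> transl (?w - ?e) (link q n a0 a1) \<inter> latM"
    define z where "z = x - ?w"
    have eq: "x - (?w - ?e) = z + ?e" by (simp add: z_def algebra_simps)
    have zB: "z + ?e \<in> below q n a0 a1" using x eq by (simp add: mem_transl mem_link)
    have zi: "L0 z \<in> \<int>" "L1 q n z \<in> \<int>" using x latM_L[of x] wp by (auto simp: z_def)
    note zB' = zB[unfolded mem_below[OF n]]
    have zQ: "z \<in> Q2" using Q2_diff[OF conjunct1[OF zB'] ep(1)] by simp
    have "L0 z + 1 \<ge> - of_int a0 + 1" using int_step[of "- of_int a0" "L0 z + 1"] zi zB' ep by auto
    moreover have "L1 q n z + 1 \<ge> - of_int a1 + 1" using int_step[of "- of_int a1" "L1 q n z + 1"] zi zB' ep by auto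
    ultimately have "z \<in> abelow q n a0 a1"
      using zB' zQ ep by (force simp: mem_abelow[OF n])
    then show "x \<in> transl ?w (abelow q n a0 a1) \<inter> latM" using x by (simp add: mem_transl z_def)
  qed
qed

end
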